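(* For every CEA $\mathcal{A}$ and every $\mathrm{SEL}\in\{\mathrm{STRICT},\mathrm{NEXT},\mathrm{LAST},\mathrm{MAX}\}$ there is a CEA $\mathcal{A}_{\mathrm{SEL}}$ such that $[\![\mathcal{A}_{\mathrm{SEL}}]\!](S)=[\![\mathrm{SEL}(\mathcal{A})]\!](S)$ for every stream $S$. Moreover, $\mathcal{A}_{\mathrm{STRICT}}$ has at most twice as many states and transitions as $\mathcal{A}$, and $\mathcal{A}_{\mathrm{NEXT}},\mathcal{A}_{\mathrm{LAST}},\mathcal{A}_{\mathrm{MAX}}$ have size at most exponential in $|\mathcal{A}|$.
   Context: Fix a schema $\mathcal{R}$ and let $\mathrm{tuples}(\mathcal{R})$ be the set of all its tuples. A stream is an infinite sequence $S=t_0t_1\ldots$ of tuples. A complex event is a non-empty finite subset of $\mathbb{N}$. Fix a set $\mathbf{U}$ of unary predicates (subsets of $\mathrm{tuples}(\mathcal{R})$), closed under union, intersection and complement, and containing $\mathrm{TRUE}=\mathrm{tuples}(\mathcal{R})$. A complex event automaton (CEA) is $\mathcal{A}=(Q,\Delta,I,F)$ with $Q$ a finite set of states, $I,F\subseteq Q$, and $\Delta\subseteq Q\times(\mathbf{U}\times\{\bullet,\circ\})\times Q$ finite. A run of $\mathcal{A}$ over $S$ reading $t_0\ldots t_n$ is $q_0\xrightarrow{P_0/m_0}q_1\cdots\xrightarrow{P_n/m_n}q_{n+1}$ with $q_0\in I$, $(q_i,(P_i,m_i),q_{i+1})\in\Delta$ and $t_i\in P_i$; accepting if $q_{n+1}\in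 F$. $\mathrm{match}(\rho)=\{i : m_i=\bullet\}$. $[\![\mathcal{A}]\!]_n(S)$ is the set of $\mathrm{match}(\rho)$ for accepting runs $\rho$ reading $t_0\ldots t_n$ with $n\in\mathrm{match}(\rho)$, and $[\![\mathcal{A}]\!](S)=\bigcup_n[\![\mathcal{A}]\!]_n(S)$. $|\mathcal{A}|=|Q|+|\Delta|$. Orders: $C_1\leq_{\mathrm{next}}C_2$ iff $C_1=C_2$ or $\min(C_1\triangle C_2)\in C_2$; $C_1\leq_{\mathrm{last}}C_2$ iff $C_1=C_2$ or $\max(C_1\triangle C_2)\in C_2$ ($\triangle$ = symmetric difference). Selection strategies: $C\in[\![\mathrm{STRICT}(\mathcal{A})]\!](S)$ iff $C\in[\![\mathcal{A}]\!](S)$ and $C$ is an interval $\{i,i+1,\dots,j\}$ of consecutive integers. $C\in[\![\mathrm{NEXT}(\mathcal{A})]\!](S)$ iff $C\in[\![\mathcal{A}]\!](S)$ and $C'\leq_{\mathrm{next}}C$ for every $C'\in[\![\mathcal{A}]\!](S)$ with $\max(C')=\max(C)$. $C\in[\![\mathrm{LAST}(\mathcal{A})]\!](S)$ iff $C\in[\![\mathcal{A}]\!](S)$ and $C'\leq_{\mathrm{last}}C$ for every $C'\in[\![\mathcal{A}]\!](S)$ with $\max(C')=\max(C)$. $C\in[\![\mathrm{MAX}(\mathcal{A})]\!](S)$ iff $C\in[\![\mathcal{A}]\!](S)$ and there is no $C'\in[\![\mathcal{A}]\!](S)$ with $\max(C')=\max(C)$ and $C\subsetneq C'$. *)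

theory Defs
  imports Main
begin

text \<open>A transition is (p, (P, m), q) where the boolean m = True encodes the marking
bullet and m = False encodes the marking circ.\<close>

datatype ('q, 't) cea =
  CEA (states: "'q set") (trans: "('q \<times> ('t set \<times> bool) \<times> 'q) set")
      (init: "'q set") (final: "'q set")

type_synonym 't stream = "nat \<Rightarrow> 't"

definition is_cea :: "'t set set \<Rightarrow> ('q, 't) cea \<Rightarrow> bool" where
  "is_cea U A \<longleftrightarrow> finite (states A) \<and> finite (trans A)
     \<and> init A \<subseteq> states A \<and> final A \<subseteq> states A
     \<and> trans A \<subseteq> states A \<times> (U \<times> UNIV) \<times> states A"

definition cea_size :: "('q, 't) cea \<Rightarrow> nat" where
  "cea_size A = card (states A) + card (trans A)"

definition accepting_run ::
  "('q, 't) cea \<Rightarrow> 't stream \<Rightarrow> nat \<Rightarrow> (nat \<Rightarrow> 'q) \<Rightarrow> (nat \<Rightarrow> 't set) \<Rightarrow> (nat \<Rightarrow> bool) \<Rightarrow> bool" where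
  "accepting_run A S n qs P m \<longleftrightarrow> qs 0 \<in> init A
     \<and> (\<forall>i\<le>n. (qs i, (P i, m i), qs (Suc i)) \<in> trans A \<and> S i \<in> P i)
     \<and> qs (Suc n) \<in> final A"

definition sem_at :: "('q, 't) cea \<Rightarrow> 't stream \<Rightarrow> nat \<Rightarrow> nat set set" where
  "sem_at A S n = {C. \<exists>qs P m. accepting_run A S n qs P m \<and> m n \<and> C = {i. i \<le> n \<and> m i}}"

definition sem :: "('q, 't) cea \<Rightarrow> 't stream \<Rightarrow> nat set set" where
  "sem A S = (\<Union>n. sem_at A S n)"

definition symdiff :: "nat set \<Rightarrow> nat set \<Rightarrow> nat set" where
  "symdiff C1 C2 = (C1 - C2) \<union> (C2 - C1)"

definition le_next :: "nat set \<Rightarrow> nat set \<Rightarrow> bool" where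
  "le_next C1 C2 \<longleftrightarrow> C1 = C2 \<or> Min (symdiff C1 C2) \<in> C2"

definition le_last :: "nat set \<Rightarrow> nat set \<Rightarrow> bool" where
  "le_last C1 C2 \<longleftrightarrow> C1 = C2 \<or> Max (symdiff C1 C2) \<in> C2"

datatype selection = Strict | Next | Last | Max_sel

fun sel_sem :: "selection \<Rightarrow> ('q, 't) cea \<Rightarrow> 't stream \<Rightarrow> nat set set" where
  "sel_sem Strict A S = {C \<in> sem A S. \<exists>i j. C = {i..j}}"
| "sel_sem Next A S = {C \<in> sem A S. \<forall>C'\<in>sem A S. Max C' = Max C \<longrightarrow> le_next C' C}"
| "sel_sem Last A S = {C \<in> sem A S. \<forall>C'\<in>sem A S. Max C' = Max C \<longrightarrow> le_last C' C}"
| "sel_sem Max_sel A S = {C \<in> sem A S. \<not> (\<exists>C'\<in>sem A S. Max C' = Max C \<and> C \<subset> C')}"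

end

theory Submission
  imports Defs
begin


datatype cmp = Eq | Win | Lose

lemma UNIV_cmp: "(UNIV::cmp set) = {Eq, Win, Lose}"
  using cmp.exhaust by auto

lemma card_UNIV_cmp: "card (UNIV::cmp set) = 3"
  by (simp add: UNIV_cmp)

fun dstep :: "selection \<Rightarrow> cmp \<Rightarrow> bool \<Rightarrow> bool \<Rightarrow> cmp" where
  "dstep Next d b' b = (if d = Eq then (if b' = b then Eq else if b' then Win else Lose) else d)"
| "dstep Last d b' b = (if b' = b then d else if b' then Win else Lose)"
| "dstep Max_sel d b' b = (if d = Lose then Lose else if b \<and> \<not> b' then Lose else if b' \<and> \<not> b then Win else d)"
| "dstep Strict d b' b = d"

fun drun :: "selection \<Rightarrow> (nat \<Rightarrow> bool) \<Rightarrow> (nat \<Rightarrow> bool) \<Rightarrow> nat \<Rightarrow> cmp" where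
  "drun sel m' m 0 = Eq"
| "drun sel m' m (Suc k) = dstep sel (drun sel m' m k) (m' k) (m k)"

lemma drun_cong: "(\<forall>i<k. m1 i = m2 i) \<Longrightarrow> drun sel m1 m k = drun sel m2 m k"
  by (induction k) auto

lemma drun_next: "(drun Next m' m k = Eq \<longleftrightarrow> (\<forall>i<k. m' i = m i)) \<and>
   (drun Next m' m k = Win \<longleftrightarrow> (\<exists>i<k. m' i \<and> \<not> m i \<and> (\<forall>j<i. m' j = m j)))"
proof (induction k)
  case 0 then show ?case by simp
next
  case (Suc k)
  show ?case
  proof (cases "drun Next m' m k")
    case Eq
    with Suc show ?thesis by (auto simp: less_Suc_eq) 
  next
    case Win
    with Suc show ?thesis by (auto simp: less_Suc_eq)
  next
    case Lose
    with Suc show ?thesis  by (auto simp: less_Suc_eq)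
  qed
qed

lemma drun_last: "(drun Last m' m k = Eq \<longleftrightarrow> (\<forall>i<k. m' i = m i)) \<and>
   (drun Last m' m k = Win \<longleftrightarrow> (\<exists>i<k. m' i \<and> \<not> m i \<and> (\<forall>j. i < j \<and> j < k \<longrightarrow> m' j = m j)))"
proof (induction k)
  case 0 then show ?case by simp
next
  case (Suc k)
  show ?case
  proof (cases "m' k = m k")
    case True
    with Suc show ?thesis by (auto simp: less_Suc_eq)
  next
    case False
    with Suc show ?thesis by (auto simp: less_Suc_eq)
  qed
qed

lemma drun_max: "(drun Max_sel m' m k = Lose \<longleftrightarrow> (\<exists>i<k. m i \<and> \<not> m' i)) \<and>
   (drun Max_sel m' m k = Win \<longleftrightarrow> (\<not>(\<exists>i<k. m i \<and> \<not> m' i)) \<and> (\<exists>i<k. m' i \<and> \<not> m i))"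
proof (induction k)
  case 0 then show ?case by simp
next
  case (Suc k)
  show ?case
  proof (cases "drun Max_sel m' m k")
    case Eq
    with Suc show ?thesis by (auto simp: less_Suc_eq)
  next
    case Win
    with Suc show ?thesis by (auto simp: less_Suc_eq)
  next
    case Lose
    with Suc show ?thesis by (auto simp: less_Suc_eq)
  qed
qed


lemma symdiff_restr: "symdiff {i. i\<le>n \<and> m' i} {i. i\<le>n \<and> m i} = {i. i\<le>n \<and> m' i \<noteq> m i}"
  unfolding symdiff_def by auto

lemma next_rel: "drun Next m' m (Suc n) = Win \<longleftrightarrow> \<not> le_next {i. i\<le>n \<and> m' i} {i. i\<le>n \<and> m i}"
proof -
  let ?D = "{i. i\<le>n \<and> m' i \<noteq> m i}"
  have fD: "finite ?D" by simp
  show ?thesis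
  proof
    assume "drun Next m' m (Suc n) = Win"
    then obtain i where i: "i < Suc n" "m' i" "\<not> m i" "\<forall>j<i. m' j = m j" using drun_next[THEN conjunct2, THEN iffD1] by blast
    have "Min ?D = i"
    proof (rule Min_eqI[OF fD])
      fix y assume "y \<in> ?D" then show "i \<le> y" using i(4) by (simp add: not_le[symmetric]) blast
    next
      show "i \<in> ?D" using i by simp
    qed
    moreover have "i \<in> {i. i\<le>n \<and> m' i}" "i \<notin> {i. i\<le>n \<and> m i}" using i by auto
    ultimately show "\<not> le_next {i. i\<le>n \<and> m' i} {i. i\<le>n \<and> m i}"
      unfolding le_next_def symdiff_restr by (simp only:) blast
  next
    assume a: "\<not> le_next {i. i\<le>n \<and> m' i} {i. i\<le>n \<and> m i}"
    then have neq: "{i. i\<le>n \<and> m' i} \<noteq> {i. i\<le>n \<and> m i}" unfolding le_next_def by blast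
    have ne: "?D \<noteq> {}"
    proof
      assume "?D = {}"
      then have "\<forall>i\<le>n. m' i = m i" by blast
      then have "{i. i\<le>n \<and> m' i} = {i. i\<le>n \<and> m i}" by blast
      with neq show False by blast
    qed
    let ?i = "Min ?D"
    have iD: "?i \<in> ?D" using Min_in[OF fD ne] .
    have iC: "\<not> (?i \<le> n \<and> m ?i)" using a unfolding le_next_def symdiff_restr by (simp only: mem_Collect_eq) blast
    have "\<forall>j<?i. m' j = m j"
    proof (intro allI impI)
      fix j assume "j < ?i"
      moreover have "j \<le> n" using \<open>j < ?i\<close> iD by simp
      ultimately show "m' j = m j" using Min_le[OF fD, of j] by (simp add: not_le[symmetric]) blast
    qed
    moreover have "?i < Suc n" "m' ?i" "\<not> m ?i" using iD iC by auto
    ultimately show "drun Next m' m (Suc n) = Win" using drun_next[THEN conjunct2, THEN iffD2] by blast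
  qed
qed
lemma last_rel: "drun Last m' m (Suc n) = Win \<longleftrightarrow> \<not> le_last {i. i\<le>n \<and> m' i} {i. i\<le>n \<and> m i}"
proof -
  let ?D = "{i. i\<le>n \<and> m' i \<noteq> m i}"
  have fD: "finite ?D" by simp
  show ?thesis
  proof
    assume "drun Last m' m (Suc n) = Win"
    then obtain i where i: "i < Suc n" "m' i" "\<not> m i" "\<forall>j. i < j \<and> j < Suc n \<longrightarrow> m' j = m j" using drun_last[THEN conjunct2, THEN iffD1] by blast
    have "Max ?D = i"
    proof (rule Max_eqI[OF fD])
      fix y assume y: "y \<in> ?D" show "y \<le> i"
      proof (rule ccontr)
        assume "\<not> y \<le> i"
        then have "i < y \<and> y < Suc n" using y by simp
        then have "m' y = m y" using i(4) by blast
        then show False using y by simp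
      qed
    next
      show "i \<in> ?D" using i by simp
    qed
    moreover have "i \<in> {i. i\<le>n \<and> m' i}" "i \<notin> {i. i\<le>n \<and> m i}" using i by auto
    ultimately show "\<not> le_last {i. i\<le>n \<and> m' i} {i. i\<le>n \<and> m i}"
      unfolding le_last_def symdiff_restr by (simp only:) blast
  next
    assume a: "\<not> le_last {i. i\<le>n \<and> m' i} {i. i\<le>n \<and> m i}"
    then have neq: "{i. i\<le>n \<and> m' i} \<noteq> {i. i\<le>n \<and> m i}" unfolding le_last_def by blast
    have ne: "?D \<noteq> {}"
    proof
      assume "?D = {}"
      then have "\<forall>i\<le>n. m' i = m i" by blast
      then have "{i. i\<le>n \<and> m' i} = {i. i\<le>n \<and> m i}" by blast
      with neq show False by blast
    qed
    let ?i = "Max ?D"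
    have iD: "?i \<in> ?D" using Max_in[OF fD ne] .
    have iC: "\<not> (?i \<le> n \<and> m ?i)" using a unfolding le_last_def symdiff_restr by (simp only: mem_Collect_eq) blast
    have "\<forall>j. ?i < j \<and> j < Suc n \<longrightarrow> m' j = m j"
    proof (intro allI impI)
      fix j assume "?i < j \<and> j < Suc n"
      show "m' j = m j"
      proof (rule ccontr)
        assume "m' j \<noteq> m j"
        then have "j \<in> ?D" using \<open>?i < j \<and> j < Suc n\<close> by simp
        then have "j \<le> ?i" by (rule Max_ge[OF fD])
        then show False using \<open>?i < j \<and> j < Suc n\<close> by simp
      qed
    qed
    moreover have "?i < Suc n" "m' ?i" "\<not> m ?i" using iD iC by auto
    ultimately show "drun Last m' m (Suc n) = Win" using drun_last[THEN conjunct2, THEN iffD2] by blast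
  qed
qed
lemma max_rel: "drun Max_sel m' m (Suc n) = Win \<longleftrightarrow> {i. i\<le>n \<and> m i} \<subset> {i. i\<le>n \<and> m' i}"
proof -
  have "drun Max_sel m' m (Suc n) = Win \<longleftrightarrow> (\<not>(\<exists>i<Suc n. m i \<and> \<not> m' i)) \<and> (\<exists>i<Suc n. m' i \<and> \<not> m i)"
    by (rule drun_max[THEN conjunct2])
  also have "\<dots> \<longleftrightarrow> {i. i\<le>n \<and> m i} \<subset> {i. i\<le>n \<and> m' i}"
    unfolding less_Suc_eq_le by blast
  finally show ?thesis .
qed



definition tpred :: "('q \<times> ('t set \<times> bool) \<times> 'q) \<Rightarrow> 't set" where
  "tpred tr = fst (fst (snd tr))"

definition atom :: "('q \<times> ('t set \<times> bool) \<times> 'q) set \<Rightarrow> ('q \<times> ('t set \<times> bool) \<times> 'q) set \<Rightarrow> 't set" where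
  "atom D T = \<Inter> (tpred ` T \<union> (\<lambda>tr. - tpred tr) ` (D - T))"

definition sig :: "('q \<times> ('t set \<times> bool) \<times> 'q) set \<Rightarrow> 't \<Rightarrow> ('q \<times> ('t set \<times> bool) \<times> 'q) set" where
  "sig D t = {tr \<in> D. t \<in> tpred tr}"

lemma atom_iff: "T \<subseteq> D \<Longrightarrow> t \<in> atom D T \<longleftrightarrow> T = sig D t"
  unfolding atom_def sig_def by auto

lemma sig_sub: "sig D t \<subseteq> D" unfolding sig_def by auto

definition stepX :: "selection \<Rightarrow> ('q \<times> ('t set \<times> bool) \<times> 'q) set \<Rightarrow> bool \<Rightarrow> ('q \<times> cmp \<times> bool) set \<Rightarrow> ('q \<times> cmp \<times> bool) set" where
  "stepX sel T b X = {(p', dstep sel d b' b, b') | p d x P' b' p'. (p,d,x) \<in> X \<and> (p,(P',b'),p') \<in> T}"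

definition reach :: "selection \<Rightarrow> ('q,'t) cea \<Rightarrow> 't stream \<Rightarrow> (nat \<Rightarrow> bool) \<Rightarrow> nat \<Rightarrow> ('q \<times> cmp \<times> bool) set" where
  "reach sel A S m k = {(qs k, drun sel m' m k, k \<noteq> 0 \<and> m' (k - 1)) | qs P m'. qs 0 \<in> init A
      \<and> (\<forall>i<k. (qs i, (P i, m' i), qs (Suc i)) \<in> trans A \<and> S i \<in> P i)}"

lemma reachI: "qs 0 \<in> init A \<Longrightarrow> \<forall>i<k. (qs i, (P i, m' i), qs (Suc i)) \<in> trans A \<and> S i \<in> P i
  \<Longrightarrow> (qs k, drun sel m' m k, k \<noteq> 0 \<and> m' (k - 1)) \<in> reach sel A S m k"
  unfolding reach_def by blast

lemma reach_0: "reach sel A S m 0 = init A \<times> {Eq} \<times> {False}"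
proof
  show "reach sel A S m 0 \<subseteq> init A \<times> {Eq} \<times> {False}" unfolding reach_def by auto
next
  show "init A \<times> {Eq} \<times> {False} \<subseteq> reach sel A S m 0"
  proof
    fix x assume "x \<in> init A \<times> {Eq} \<times> {False}"
    then obtain q where q: "q \<in> init A" "x = (q, Eq, False)" by auto
    have "((\<lambda>_. q) 0, drun sel (\<lambda>_. False) m 0, 0 \<noteq> 0 \<and> (\<lambda>_. False) (0 - 1)) \<in> reach sel A S m 0"
      using reachI[where qs="\<lambda>_. q" and k=0 and P="\<lambda>_. {}" and m'="\<lambda>_. False" and A=A and S=S and sel=sel and m=m] q(1) by simp
    then show "x \<in> reach sel A S m 0" using q(2) by simp
  qed
qed

lemma reach_Suc: "reach sel A S m (Suc k) = stepX sel (sig (trans A) (S k)) (m k) (reach sel A S m k)"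
proof
  show "reach sel A S m (Suc k) \<subseteq> stepX sel (sig (trans A) (S k)) (m k) (reach sel A S m k)"
  proof
    fix x assume "x \<in> reach sel A S m (Suc k)"
    then obtain qs P m' where x: "x = (qs (Suc k), drun sel m' m (Suc k), m' k)"
      and r: "qs 0 \<in> init A" "\<forall>i<Suc k. (qs i, (P i, m' i), qs (Suc i)) \<in> trans A \<and> S i \<in> P i"
      unfolding reach_def by auto
    have "(qs k, drun sel m' m k, k \<noteq> 0 \<and> m' (k - 1)) \<in> reach sel A S m k"
      by (rule reachI[where P=P]) (use r in auto)
    moreover have "(qs k, (P k, m' k), qs (Suc k)) \<in> sig (trans A) (S k)"
      using r(2) unfolding sig_def tpred_def by auto
    ultimately show "x \<in> stepX sel (sig (trans A) (S k)) (m k) (reach sel A S m k)"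
      unfolding stepX_def x by fastforce
  qed
next
  show "stepX sel (sig (trans A) (S k)) (m k) (reach sel A S m k) \<subseteq> reach sel A S m (Suc k)"
  proof
    fix y assume "y \<in> stepX sel (sig (trans A) (S k)) (m k) (reach sel A S m k)"
    then obtain p d x P' b' p' where y: "y = (p', dstep sel d b' (m k), b')"
      and pd: "(p,d,x) \<in> reach sel A S m k" and tr: "(p,(P',b'),p') \<in> sig (trans A) (S k)"
      unfolding stepX_def by blast
    from pd obtain qs P m' where pe: "p = qs k" "d = drun sel m' m k"
      and r: "qs 0 \<in> init A" "\<forall>i<k. (qs i, (P i, m' i), qs (Suc i)) \<in> trans A \<and> S i \<in> P i"
      unfolding reach_def by auto
    define qs2 where "qs2 = qs(Suc k := p')"
    define P2 where "P2 = P(k := P')"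
    define m2 where "m2 = m'(k := b')"
    have r2: "\<forall>i<Suc k. (qs2 i, (P2 i, m2 i), qs2 (Suc i)) \<in> trans A \<and> S i \<in> P2 i"
    proof (intro allI impI)
      fix i assume "i < Suc k"
      then consider "i < k" | "i = k" by linarith
      then show "(qs2 i, (P2 i, m2 i), qs2 (Suc i)) \<in> trans A \<and> S i \<in> P2 i"
      proof cases
        case 1 then show ?thesis using r(2) unfolding qs2_def P2_def m2_def by auto
      next
        case 2 then show ?thesis using tr pe(1) unfolding qs2_def P2_def m2_def sig_def tpred_def by auto
      qed
    qed
    have "drun sel m2 m k = d" unfolding pe(2) m2_def by (rule drun_cong) auto
    then have "drun sel m2 m (Suc k) = dstep sel d b' (m k)" by (simp add: m2_def)
    moreover have "qs2 0 \<in> init A" using r(1) unfolding qs2_def by simp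
    have "(qs2 (Suc k), drun sel m2 m (Suc k), Suc k \<noteq> 0 \<and> m2 (Suc k - 1)) \<in> reach sel A S m (Suc k)"
      by (rule reachI[where P=P2]) (use r2 \<open>qs2 0 \<in> init A\<close> in auto)
    moreover note \<open>drun sel m2 m (Suc k) = dstep sel d b' (m k)\<close>
    ultimately have "(qs2 (Suc k), dstep sel d b' (m k), m2 k) \<in> reach sel A S m (Suc k)" by simp
    then show "y \<in> reach sel A S m (Suc k)" using y
      by (simp add: qs2_def m2_def)
  qed
qed

lemma reach_sub: assumes "is_cea U A" shows "reach sel A S m k \<subseteq> states A \<times> UNIV \<times> UNIV"
proof
  fix x assume "x \<in> reach sel A S m k"
  then obtain qs P m' where x: "x = (qs k, drun sel m' m k, k \<noteq> 0 \<and> m' (k - 1))"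
      and r: "qs 0 \<in> init A" "\<forall>i<k. (qs i, (P i, m' i), qs (Suc i)) \<in> trans A \<and> S i \<in> P i"
      unfolding reach_def by auto
  have "qs k \<in> states A"
  proof (cases k)
    case 0 then show ?thesis using r(1) assms unfolding is_cea_def by auto
  next
    case (Suc j)
    then have "(qs j, (P j, m' j), qs (Suc j)) \<in> trans A" using r(2) by auto
    then show ?thesis using assms Suc unfolding is_cea_def by auto
  qed
  then show "x \<in> states A \<times> UNIV \<times> UNIV" using x by simp
qed



definition selT :: "selection \<Rightarrow> ('q,'t) cea \<Rightarrow> ('q \<times> ('t set \<times> bool) \<times> 'q) \<times> ('q \<times> ('t set \<times> bool) \<times> 'q) set \<times> bool \<times> ('q \<times> cmp \<times> bool) set
   \<Rightarrow> ('q \<times> bool \<times> ('q \<times> cmp \<times> bool) set) \<times> ('t set \<times> bool) \<times> ('q \<times> bool \<times> ('q \<times> cmp \<times> bool) set)" where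
  "selT sel A = (\<lambda>((q,(P,b),q'),T,b0,X). ((q,b0,X),(P \<inter> atom (trans A) T, b),(q', b, stepX sel T b X)))"

lemma selT_simp: "selT sel A ((q,(P,b),q'),T,b0,X) = ((q,b0,X),(P \<inter> atom (trans A) T, b),(q', b, stepX sel T b X))"
  unfolding selT_def by simp

definition selA :: "selection \<Rightarrow> ('q,'t) cea \<Rightarrow> ('q \<times> bool \<times> ('q \<times> cmp \<times> bool) set, 't) cea" where
"selA sel A = CEA (states A \<times> UNIV \<times> Pow (states A \<times> UNIV \<times> UNIV))
  (selT sel A ` (trans A \<times> Pow (trans A) \<times> UNIV \<times> Pow (states A \<times> UNIV \<times> UNIV)))
  ((\<lambda>q. (q, False, init A \<times> {Eq} \<times> {False})) ` init A)
  {(q, True, X) | q X. q \<in> final A \<and> X \<subseteq> states A \<times> UNIV \<times> UNIV \<and> \<not>(\<exists>p. (p, Win, True) \<in> X \<and> p \<in> final A)}"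

lemma selA_trans_iff: "((s, (P', b), s') \<in> trans (selA sel A)) \<longleftrightarrow> (\<exists>q b0 X P q' T. s = (q,b0,X) \<and> P' = P \<inter> atom (trans A) T
    \<and> s' = (q', b, stepX sel T b X) \<and> (q,(P,b),q') \<in> trans A \<and> T \<subseteq> trans A \<and> X \<subseteq> states A \<times> UNIV \<times> UNIV)"
proof
  assume "(s, (P', b), s') \<in> trans (selA sel A)"
  then obtain d where d: "d \<in> trans A \<times> Pow (trans A) \<times> UNIV \<times> Pow (states A \<times> UNIV \<times> UNIV)"
    and e: "(s, (P', b), s') = selT sel A d" unfolding selA_def by auto
  obtain q P bb q' T b0 X where dd: "d = ((q,(P,bb),q'),T,b0,X)" by (cases d) auto
  from e have e2: "s = (q,b0,X)" "P' = P \<inter> atom (trans A) T" "b = bb" "s' = (q', bb, stepX sel T bb X)"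
    unfolding dd selT_simp by simp_all
  show "\<exists>q b0 X P q' T. s = (q,b0,X) \<and> P' = P \<inter> atom (trans A) T
    \<and> s' = (q', b, stepX sel T b X) \<and> (q,(P,b),q') \<in> trans A \<and> T \<subseteq> trans A \<and> X \<subseteq> states A \<times> UNIV \<times> UNIV"
    using d e2 unfolding dd by blast
next
  assume "\<exists>q b0 X P q' T. s = (q,b0,X) \<and> P' = P \<inter> atom (trans A) T
    \<and> s' = (q', b, stepX sel T b X) \<and> (q,(P,b),q') \<in> trans A \<and> T \<subseteq> trans A \<and> X \<subseteq> states A \<times> UNIV \<times> UNIV"
  then obtain q b0 X P q' T where e: "s = (q,b0,X)" "P' = P \<inter> atom (trans A) T"
    "s' = (q', b, stepX sel T b X)" "(q,(P,b),q') \<in> trans A" "T \<subseteq> trans A" "X \<subseteq> states A \<times> UNIV \<times> UNIV" by blast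
  have "selT sel A ((q,(P,b),q'),T,b0,X) \<in> selT sel A ` (trans A \<times> Pow (trans A) \<times> UNIV \<times> Pow (states A \<times> UNIV \<times> UNIV))"
    using e by blast
  then show "(s, (P', b), s') \<in> trans (selA sel A)" unfolding selA_def selT_simp e by simp
qed

lemma selA_init_iff: "s \<in> init (selA sel A) \<longleftrightarrow> (\<exists>q. q \<in> init A \<and> s = (q, False, init A \<times> {Eq} \<times> {False}))"
  unfolding selA_def by auto

lemma selA_final_iff: "s \<in> final (selA sel A) \<longleftrightarrow> (\<exists>q X. s = (q, True, X) \<and> q \<in> final A \<and> X \<subseteq> states A \<times> UNIV \<times> UNIV \<and> \<not>(\<exists>p. (p, Win, True) \<in> X \<and> p \<in> final A))"
  unfolding selA_def by auto

lemma selA_run_to: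
  assumes run: "accepting_run (selA sel A) S n qs' P' m" and mn: "m n"
  shows "(\<exists>qs P. accepting_run A S n qs P m) \<and> \<not>(\<exists>qs P m'. accepting_run A S n qs P m' \<and> m' n \<and> drun sel m' m (Suc n) = Win)"
proof -
  from run have tr: "\<forall>i\<le>n. (qs' i, (P' i, m i), qs' (Suc i)) \<in> trans (selA sel A) \<and> S i \<in> P' i"
    and i0: "qs' 0 \<in> init (selA sel A)" and fin: "qs' (Suc n) \<in> final (selA sel A)"
    unfolding accepting_run_def by auto
  have "\<forall>i\<le>n. \<exists>Pi. (fst (qs' i), (Pi, m i), fst (qs' (Suc i))) \<in> trans A \<and> S i \<in> Pi
      \<and> snd (snd (qs' (Suc i))) = stepX sel (sig (trans A) (S i)) (m i) (snd (snd (qs' i)))"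
  proof (intro allI impI)
    fix i assume "i \<le> n"
    then have a: "(qs' i, (P' i, m i), qs' (Suc i)) \<in> trans (selA sel A)" "S i \<in> P' i" using tr by auto
    from a(1) obtain q b0 X P q' T where e: "qs' i = (q,b0,X)" "P' i = P \<inter> atom (trans A) T"
      "qs' (Suc i) = (q', m i, stepX sel T (m i) X)" "(q,(P,m i),q') \<in> trans A" "T \<subseteq> trans A"
      unfolding selA_trans_iff by blast
    have "T = sig (trans A) (S i)" using a(2) e(2) atom_iff[OF e(5)] by blast
    then show "\<exists>Pi. (fst (qs' i), (Pi, m i), fst (qs' (Suc i))) \<in> trans A \<and> S i \<in> Pi
      \<and> snd (snd (qs' (Suc i))) = stepX sel (sig (trans A) (S i)) (m i) (snd (snd (qs' i)))"
      using e a(2) by (intro exI[of _ P]) auto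
  qed
  then obtain P where P: "\<forall>i\<le>n. (fst (qs' i), (P i, m i), fst (qs' (Suc i))) \<in> trans A \<and> S i \<in> P i
      \<and> snd (snd (qs' (Suc i))) = stepX sel (sig (trans A) (S i)) (m i) (snd (snd (qs' i)))"
    by metis
  have X: "k \<le> Suc n \<Longrightarrow> snd (snd (qs' k)) = reach sel A S m k" for k
  proof (induction k)
    case 0 then show ?case using i0 unfolding selA_init_iff by (auto simp: reach_0)
  next
    case (Suc k) then show ?case using P by (simp add: reach_Suc)
  qed
  have runA: "accepting_run A S n (\<lambda>k. fst (qs' k)) P m"
    unfolding accepting_run_def using P i0 fin unfolding selA_init_iff selA_final_iff by auto
  obtain q Xf where f: "qs' (Suc n) = (q, True, Xf)" "\<not>(\<exists>p. (p, Win, True) \<in> Xf \<and> p \<in> final A)"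
    using fin unfolding selA_final_iff by blast
  have Xf: "Xf = reach sel A S m (Suc n)" using X[of "Suc n"] f(1) by simp
  have "\<not>(\<exists>qs P m'. accepting_run A S n qs P m' \<and> m' n \<and> drun sel m' m (Suc n) = Win)"
  proof
    assume "\<exists>qs P m'. accepting_run A S n qs P m' \<and> m' n \<and> drun sel m' m (Suc n) = Win"
    then obtain qs2 P2 m2 where r2: "accepting_run A S n qs2 P2 m2" "m2 n" "drun sel m2 m (Suc n) = Win" by blast
    have "(qs2 (Suc n), drun sel m2 m (Suc n), Suc n \<noteq> 0 \<and> m2 (Suc n - 1)) \<in> reach sel A S m (Suc n)"
      by (rule reachI[where P=P2]) (use r2(1) in \<open>auto simp: accepting_run_def less_Suc_eq_le\<close>)
    then have "(qs2 (Suc n), Win, True) \<in> Xf" using r2 Xf by simp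
    moreover have "qs2 (Suc n) \<in> final A" using r2(1) unfolding accepting_run_def by simp
    ultimately show False using f(2) by blast
  qed
  then show ?thesis using runA by blast
qed

lemma selA_run_from:
  assumes cea: "is_cea U A" and run: "accepting_run A S n qs P m" and mn: "m n"
    and no: "\<not>(\<exists>qs P m'. accepting_run A S n qs P m' \<and> m' n \<and> drun sel m' m (Suc n) = Win)"
  shows "accepting_run (selA sel A) S n (\<lambda>k. (qs k, k \<noteq> 0 \<and> m (k-1), reach sel A S m k))
           (\<lambda>k. P k \<inter> atom (trans A) (sig (trans A) (S k))) m"
proof -
  from run have tr: "\<forall>i\<le>n. (qs i, (P i, m i), qs (Suc i)) \<in> trans A \<and> S i \<in> P i"
    and i0: "qs 0 \<in> init A" and fin: "qs (Suc n) \<in> final A"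
    unfolding accepting_run_def by auto
  have "\<forall>i\<le>n. ((qs i, i \<noteq> 0 \<and> m (i-1), reach sel A S m i), (P i \<inter> atom (trans A) (sig (trans A) (S i)), m i),
          (qs (Suc i), Suc i \<noteq> 0 \<and> m (Suc i - 1), reach sel A S m (Suc i))) \<in> trans (selA sel A)
        \<and> S i \<in> P i \<inter> atom (trans A) (sig (trans A) (S i))"
  proof (intro allI impI conjI)
    fix i assume i: "i \<le> n"
    show "((qs i, i \<noteq> 0 \<and> m (i-1), reach sel A S m i), (P i \<inter> atom (trans A) (sig (trans A) (S i)), m i),
          (qs (Suc i), Suc i \<noteq> 0 \<and> m (Suc i - 1), reach sel A S m (Suc i))) \<in> trans (selA sel A)"
      unfolding selA_trans_iff
    proof (intro exI conjI)
      show "(qs i, (P i, m i), qs (Suc i)) \<in> trans A" using tr i by auto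
      show "sig (trans A) (S i) \<subseteq> trans A" by (rule sig_sub)
      show "reach sel A S m i \<subseteq> states A \<times> UNIV \<times> UNIV" by (rule reach_sub[OF cea])
    qed (auto simp: reach_Suc)
    show "S i \<in> P i \<inter> atom (trans A) (sig (trans A) (S i))"
      using tr i atom_iff[OF sig_sub, of "S i" "trans A" "S i"] by auto
  qed
  moreover have "(qs 0, 0 \<noteq> 0 \<and> m (0-1), reach sel A S m 0) \<in> init (selA sel A)"
    unfolding selA_init_iff reach_0 using i0 by auto
  moreover have "(qs (Suc n), Suc n \<noteq> 0 \<and> m (Suc n - 1), reach sel A S m (Suc n)) \<in> final (selA sel A)"
  proof -
    have "\<not>(\<exists>p. (p, Win, True) \<in> reach sel A S m (Suc n) \<and> p \<in> final A)"
    proof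
      assume "\<exists>p. (p, Win, True) \<in> reach sel A S m (Suc n) \<and> p \<in> final A"
      then obtain p where p: "(p, Win, True) \<in> reach sel A S m (Suc n)" "p \<in> final A" by blast
      then obtain qs2 P2 m2 where e0: "(p, Win, True) = (qs2 (Suc n), drun sel m2 m (Suc n), Suc n \<noteq> 0 \<and> m2 (Suc n - 1))"
        "qs2 0 \<in> init A" "\<forall>i<Suc n. (qs2 i, (P2 i, m2 i), qs2 (Suc i)) \<in> trans A \<and> S i \<in> P2 i"
        unfolding reach_def by blast
      from e0(1) have e1: "qs2 (Suc n) = p" "drun sel m2 m (Suc n) = Win" "m2 n" by (simp_all del: drun.simps)
      have e: "qs2 (Suc n) \<in> final A" "drun sel m2 m (Suc n) = Win" "m2 n"
        "qs2 0 \<in> init A" "\<forall>i<Suc n. (qs2 i, (P2 i, m2 i), qs2 (Suc i)) \<in> trans A \<and> S i \<in> P2 i"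
        using e0 e1 p by auto
      then have "accepting_run A S n qs2 P2 m2" unfolding accepting_run_def by (auto simp: less_Suc_eq_le)
      then show False using no e by blast
    qed
    then show ?thesis unfolding selA_final_iff using fin mn reach_sub[OF cea] by auto
  qed
  ultimately show ?thesis unfolding accepting_run_def by simp
qed



definition Rel :: "selection \<Rightarrow> nat set \<Rightarrow> nat set \<Rightarrow> bool" where
  "Rel sel C' C = (case sel of Next \<Rightarrow> \<not> le_next C' C | Last \<Rightarrow> \<not> le_last C' C | Max_sel \<Rightarrow> C \<subset> C' | Strict \<Rightarrow> False)"

lemma rel_drun: "sel \<noteq> Strict \<Longrightarrow> drun sel m' m (Suc n) = Win \<longleftrightarrow> Rel sel {i. i\<le>n \<and> m' i} {i. i\<le>n \<and> m i}"
  by (cases sel) (simp_all only: Rel_def selection.case next_rel last_rel max_rel, simp)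

lemma sem_at_selA: assumes cea: "is_cea U A" and ns: "sel \<noteq> Strict"
  shows "sem_at (selA sel A) S n = {C \<in> sem_at A S n. \<forall>C'\<in>sem_at A S n. \<not> Rel sel C' C}"
proof (intro set_eqI iffI)
  fix C assume "C \<in> sem_at (selA sel A) S n"
  then obtain qs' P' m where r: "accepting_run (selA sel A) S n qs' P' m" "m n" "C = {i. i\<le>n \<and> m i}"
    unfolding sem_at_def by blast
  from selA_run_to[OF r(1,2)] obtain qs P where ra: "accepting_run A S n qs P m"
    and no: "\<not>(\<exists>qs P m'. accepting_run A S n qs P m' \<and> m' n \<and> drun sel m' m (Suc n) = Win)" by blast
  have "C \<in> sem_at A S n" using ra r unfolding sem_at_def by blast
  moreover have "\<forall>C'\<in>sem_at A S n. \<not> Rel sel C' C"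
  proof
    fix C' assume "C' \<in> sem_at A S n"
    then obtain qs2 P2 m2 where r2: "accepting_run A S n qs2 P2 m2" "m2 n" "C' = {i. i\<le>n \<and> m2 i}"
      unfolding sem_at_def by blast
    then show "\<not> Rel sel C' C" using no rel_drun[OF ns, of m2 m n] r(3) by blast
  qed
  ultimately show "C \<in> {C \<in> sem_at A S n. \<forall>C'\<in>sem_at A S n. \<not> Rel sel C' C}" by blast
next
  fix C assume "C \<in> {C \<in> sem_at A S n. \<forall>C'\<in>sem_at A S n. \<not> Rel sel C' C}"
  then have C: "C \<in> sem_at A S n" and nr: "\<forall>C'\<in>sem_at A S n. \<not> Rel sel C' C" by auto
  then obtain qs P m where r: "accepting_run A S n qs P m" "m n" "C = {i. i\<le>n \<and> m i}"
    unfolding sem_at_def by blast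
  have no: "\<not>(\<exists>qs P m'. accepting_run A S n qs P m' \<and> m' n \<and> drun sel m' m (Suc n) = Win)"
  proof
    assume "\<exists>qs P m'. accepting_run A S n qs P m' \<and> m' n \<and> drun sel m' m (Suc n) = Win"
    then obtain qs2 P2 m2 where r2: "accepting_run A S n qs2 P2 m2" "m2 n" "drun sel m2 m (Suc n) = Win" by blast
    then have "{i. i\<le>n \<and> m2 i} \<in> sem_at A S n" unfolding sem_at_def by blast
    moreover have "Rel sel {i. i\<le>n \<and> m2 i} C" using r2(3) rel_drun[OF ns, of m2 m n] r(3) by blast
    ultimately show False using nr by blast
  qed
  from selA_run_from[OF cea r(1) r(2) no] r(2,3) show "C \<in> sem_at (selA sel A) S n"
    unfolding sem_at_def by blast
qed

lemma sem_at_Max: assumes "C \<in> sem_at A S n" shows "Max C = n"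
proof -
  from assms obtain m where m: "m n" "C = {i. i\<le>n \<and> m i}" unfolding sem_at_def by blast
  show ?thesis unfolding m(2) by (rule Max_eqI) (use m(1) in auto)
qed

lemma sem_at_iff: "(C \<in> sem A S \<and> Max C = n) \<longleftrightarrow> C \<in> sem_at A S n"
  unfolding sem_def using sem_at_Max by blast

lemma sel_sem_alt: "sel \<noteq> Strict \<Longrightarrow> sel_sem sel A S = {C \<in> sem A S. \<forall>C'\<in>sem A S. Max C' = Max C \<longrightarrow> \<not> Rel sel C' C}"
  by (cases sel) (auto simp: Rel_def)

lemma sem_selA: assumes cea: "is_cea U A" and ns: "sel \<noteq> Strict"
  shows "sem (selA sel A) S = sel_sem sel A S"
proof (intro set_eqI iffI)
  fix C assume "C \<in> sem (selA sel A) S"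
  then obtain n where "C \<in> sem_at (selA sel A) S n" unfolding sem_def by blast
  then have C: "C \<in> sem_at A S n" and nr: "\<forall>C'\<in>sem_at A S n. \<not> Rel sel C' C"
    using sem_at_selA[OF cea ns] by auto
  have "C \<in> sem A S" "Max C = n" using C sem_at_iff by blast+
  moreover have "\<forall>C'\<in>sem A S. Max C' = Max C \<longrightarrow> \<not> Rel sel C' C"
    using nr sem_at_iff \<open>Max C = n\<close> by blast
  ultimately show "C \<in> sel_sem sel A S" unfolding sel_sem_alt[OF ns] by blast
next
  fix C assume "C \<in> sel_sem sel A S"
  then have C: "C \<in> sem A S" and nr: "\<forall>C'\<in>sem A S. Max C' = Max C \<longrightarrow> \<not> Rel sel C' C"
    unfolding sel_sem_alt[OF ns] by auto
  have "C \<in> sem_at A S (Max C)" using C sem_at_iff by blast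
  moreover have "\<forall>C'\<in>sem_at A S (Max C). \<not> Rel sel C' C" using nr sem_at_iff by blast
  ultimately have "C \<in> sem_at (selA sel A) S (Max C)" using sem_at_selA[OF cea ns] by blast
  then show "C \<in> sem (selA sel A) S" unfolding sem_def by blast
qed



lemma finite_UNIV_cmp: "finite (UNIV::cmp set)" by (simp add: UNIV_cmp)

lemma UNIV_cb: "(UNIV::(cmp \<times> bool) set) = UNIV \<times> UNIV" by simp

lemma finite_UNIV_cb: "finite (UNIV::(cmp \<times> bool) set)"
  unfolding UNIV_cb by (rule finite_cartesian_product[OF finite_UNIV_cmp]) simp

lemma card_UNIV_cb: "card (UNIV::(cmp \<times> bool) set) = 6"
  unfolding UNIV_cb card_cartesian_product card_UNIV_cmp card_UNIV_bool by simp

lemma Inter_in_U: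
  assumes "UNIV \<in> U" "\<forall>P\<in>U. \<forall>Q\<in>U. P \<union> Q \<in> U \<and> P \<inter> Q \<in> U"
  shows "finite F \<Longrightarrow> F \<subseteq> U \<Longrightarrow> \<Inter>F \<in> U"
proof (induction F rule: finite_induct)
  case empty then show ?case using assms(1) by simp
next
  case (insert x F) then show ?case using assms(2) by simp
qed

lemma atom_in_U:
  assumes u: "UNIV \<in> U" "\<forall>P\<in>U. - P \<in> U" "\<forall>P\<in>U. \<forall>Q\<in>U. P \<union> Q \<in> U \<and> P \<inter> Q \<in> U"
    and "finite D" "\<forall>tr\<in>D. tpred tr \<in> U" "T \<subseteq> D"
  shows "atom D T \<in> U"
  unfolding atom_def
proof (rule Inter_in_U[OF u(1) u(3)])
  show "finite (tpred ` T \<union> (\<lambda>tr. - tpred tr) ` (D - T))" using assms(4,6) finite_subset by blast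
  show "tpred ` T \<union> (\<lambda>tr. - tpred tr) ` (D - T) \<subseteq> U" using assms(5,6) u(2) by blast
qed

lemma stepX_sub: "T \<subseteq> trans A \<Longrightarrow> is_cea U A \<Longrightarrow> stepX sel T b X \<subseteq> states A \<times> UNIV \<times> UNIV"
  unfolding stepX_def is_cea_def by blast

lemma selA_cea:
  assumes u: "UNIV \<in> U" "\<forall>P\<in>U. - P \<in> U" "\<forall>P\<in>U. \<forall>Q\<in>U. P \<union> Q \<in> U \<and> P \<inter> Q \<in> U"
    and cea: "is_cea U A"
  shows "is_cea U (selA sel A)"
proof -
  have fQ: "finite (states A)" and fD: "finite (trans A)" and iQ: "init A \<subseteq> states A"
    and fQ2: "final A \<subseteq> states A" and DQ: "trans A \<subseteq> states A \<times> (U \<times> UNIV) \<times> states A"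
    using cea unfolding is_cea_def by auto
  have predU: "\<forall>tr\<in>trans A. tpred tr \<in> U" using DQ unfolding tpred_def by auto
  have "finite (states (selA sel A))" unfolding selA_def using fQ finite_UNIV_cb by simp
  moreover have "finite (trans (selA sel A))" unfolding selA_def using fQ fD finite_UNIV_cb by simp
  moreover have "init (selA sel A) \<subseteq> states (selA sel A)" unfolding selA_def using iQ by auto
  moreover have "final (selA sel A) \<subseteq> states (selA sel A)" unfolding selA_def using fQ2 by auto
  moreover have "trans (selA sel A) \<subseteq> states (selA sel A) \<times> (U \<times> UNIV) \<times> states (selA sel A)"
  proof
    fix x assume "x \<in> trans (selA sel A)"
    then obtain s P' b s' where x: "x = (s, (P', b), s')" "(s, (P', b), s') \<in> trans (selA sel A)"
      by (cases x) auto
    then obtain q b0 X P q' T where e: "s = (q,b0,X)" "P' = P \<inter> atom (trans A) T"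
      "s' = (q', b, stepX sel T b X)" "(q,(P,b),q') \<in> trans A" "T \<subseteq> trans A" "X \<subseteq> states A \<times> UNIV \<times> UNIV"
      unfolding selA_trans_iff by blast
    have "P \<in> U" using e(4) DQ by auto
    moreover have "atom (trans A) T \<in> U" by (rule atom_in_U[OF u fD predU e(5)])
    ultimately have "P' \<in> U" using e(2) u(3) by simp
    moreover have "q \<in> states A" "q' \<in> states A" using e(4) DQ by auto
    moreover have "stepX sel T b X \<subseteq> states A \<times> UNIV \<times> UNIV" by (rule stepX_sub[OF e(5) cea])
    ultimately show "x \<in> states (selA sel A) \<times> (U \<times> UNIV) \<times> states (selA sel A)"
      unfolding x(1) e(1,3) selA_def using e(6) by simp
  qed
  ultimately show ?thesis unfolding is_cea_def by blast
qed

lemma size_arith: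
  fixes q d :: nat
  assumes "q = 0 \<Longrightarrow> d = 0"
  shows "q * (2 * 2 ^ (q * 6)) + d * (2 ^ d * (2 * 2 ^ (q * 6))) \<le> 2 ^ (10 * (q + d))"
proof (cases "q = 0")
  case True then show ?thesis using assms by simp
next
  case False
  define N where "N = 10 * (q + d) - 1"
  have N: "Suc N = 10 * (q + d)" using False unfolding N_def by simp
  have q: "q \<le> 2 ^ q" "d \<le> 2 ^ d" by (simp_all add: less_imp_le)
  have "q * (2 * 2 ^ (q * 6)) \<le> 2 ^ q * (2 * 2 ^ (q * 6))" using q(1) by simp
  also have "\<dots> = 2 ^ (q + q * 6 + 1)" by (simp only: power_add power_one_right mult_ac)
  also have "\<dots> \<le> 2 ^ N" by (rule power_increasing) (use False N in auto)
  finally have a: "q * (2 * 2 ^ (q * 6)) \<le> 2 ^ N" .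
  have "d * (2 ^ d * (2 * 2 ^ (q * 6))) \<le> 2 ^ d * (2 ^ d * (2 * 2 ^ (q * 6)))" using q(2) by simp
  also have "\<dots> = 2 ^ (d + d + q * 6 + 1)" by (simp only: power_add power_one_right mult_ac)
  also have "\<dots> \<le> 2 ^ N" by (rule power_increasing) (use False N in auto)
  finally have b: "d * (2 ^ d * (2 * 2 ^ (q * 6))) \<le> 2 ^ N" .
  have "(2::nat) ^ (10 * (q + d)) = 2 * 2 ^ N" using N by (metis power_Suc)
  then show ?thesis using a b by linarith
qed

lemma selA_size:
  assumes cea: "is_cea U A"
  shows "cea_size (selA sel A) \<le> 2 ^ (10 * cea_size A)"
proof -
  have fQ: "finite (states A)" and fD: "finite (trans A)"
    and DQ: "trans A \<subseteq> states A \<times> (U \<times> UNIV) \<times> states A"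
    using cea unfolding is_cea_def by auto
  let ?q = "card (states A)" and ?d = "card (trans A)"
  have cs: "card (states (selA sel A)) = ?q * (2 * 2 ^ (?q * 6))"
    unfolding selA_def using fQ finite_UNIV_cb
    by (simp add: card_cartesian_product card_Pow card_UNIV_cb card_UNIV_bool finite_UNIV_cb)
  have "card (trans (selA sel A)) \<le> card (trans A \<times> Pow (trans A) \<times> (UNIV::bool set) \<times> Pow (states A \<times> (UNIV::cmp set) \<times> (UNIV::bool set)))"
    unfolding selA_def cea.sel by (rule card_image_le) (use fQ fD finite_UNIV_cb in simp)
  also have "\<dots> = ?d * (2 ^ ?d * (2 * 2 ^ (?q * 6)))"
    using fQ fD finite_UNIV_cb
    by (simp add: card_cartesian_product card_Pow card_UNIV_cb card_UNIV_bool finite_UNIV_cb)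
  finally have ct: "card (trans (selA sel A)) \<le> ?d * (2 ^ ?d * (2 * 2 ^ (?q * 6)))" .
  have "?q = 0 \<Longrightarrow> ?d = 0" using fQ DQ by auto
  then have "?q * (2 * 2 ^ (?q * 6)) + ?d * (2 ^ ?d * (2 * 2 ^ (?q * 6))) \<le> 2 ^ (10 * (?q + ?d))"
    by (rule size_arith)
  then show ?thesis unfolding cea_size_def using cs ct by simp
qed



definition strT :: "('q \<times> ('t set \<times> bool) \<times> 'q) \<times> bool \<Rightarrow> ('q \<times> bool) \<times> ('t set \<times> bool) \<times> ('q \<times> bool)" where
  "strT = (\<lambda>((p,(P,b),q),x). if b then ((p,x),(P,True),(q,True)) else ((p,False),(P,False),(q,False)))"

lemma strT_simp: "strT ((p,(P,b),q),x) = (if b then ((p,x),(P,True),(q,True)) else ((p,False),(P,False),(q,False)))"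
  unfolding strT_def by simp

definition strictA :: "('q,'t) cea \<Rightarrow> ('q \<times> bool, 't) cea" where
  "strictA A = CEA (states A \<times> UNIV) (strT ` (trans A \<times> UNIV)) (init A \<times> {False}) (final A \<times> {True})"

lemma strictA_trans_iff: "(((p,x),(P,b),(q,y)) \<in> trans (strictA A)) \<longleftrightarrow> ((p,(P,b),q) \<in> trans A \<and> y = b \<and> (\<not> b \<longrightarrow> x = False))"
proof
  assume "((p,x),(P,b),(q,y)) \<in> trans (strictA A)"
  then obtain d where d: "d \<in> trans A \<times> UNIV" and e: "((p,x),(P,b),(q,y)) = strT d"
    unfolding strictA_def by auto
  obtain p0 P0 b0 q0 x0 where dd: "d = ((p0,(P0,b0),q0),x0)" by (cases d) auto
  show "(p,(P,b),q) \<in> trans A \<and> y = b \<and> (\<not> b \<longrightarrow> x = False)"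
    using d e unfolding dd strT_simp by (cases b0) auto
next
  assume a: "(p,(P,b),q) \<in> trans A \<and> y = b \<and> (\<not> b \<longrightarrow> x = False)"
  have "strT ((p,(P,b),q),x) \<in> strT ` (trans A \<times> UNIV)" using a by blast
  moreover have "strT ((p,(P,b),q),x) = ((p,x),(P,b),(q,y))" using a unfolding strT_simp by (cases b) auto
  ultimately show "((p,x),(P,b),(q,y)) \<in> trans (strictA A)" unfolding strictA_def by simp
qed

lemma sem_at_strictA: "sem_at (strictA A) S n = {C \<in> sem_at A S n. \<exists>i j. C = {i..j}}"
proof (intro set_eqI iffI)
  fix C assume "C \<in> sem_at (strictA A) S n"
  then obtain qs' P m where r: "accepting_run (strictA A) S n qs' P m" "m n" "C = {i. i\<le>n \<and> m i}"
    unfolding sem_at_def by blast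
  define qs where "qs = (\<lambda>k. fst (qs' k))"
  define x where "x = (\<lambda>k. snd (qs' k))"
  have qsx: "qs' k = (qs k, x k)" for k unfolding qs_def x_def by simp
  from r(1) have tr: "\<forall>i\<le>n. (qs i, (P i, m i), qs (Suc i)) \<in> trans A \<and> S i \<in> P i \<and> x (Suc i) = m i \<and> (\<not> m i \<longrightarrow> x i = False)"
    and i0: "qs 0 \<in> init A" "x 0 = False" and fin: "qs (Suc n) \<in> final A"
    unfolding accepting_run_def qsx strictA_trans_iff by (auto simp: strictA_def)
  have runA: "accepting_run A S n qs P m" unfolding accepting_run_def using tr i0 fin by auto
  have cont: "m k \<Longrightarrow> k \<le> j \<Longrightarrow> j \<le> n \<Longrightarrow> m j" for k j
  proof (induction j)
    case 0 then show ?case by simp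
  next
    case (Suc j)
    show ?case
    proof (cases "k = Suc j")
      case True then show ?thesis using Suc by simp
    next
      case False
      then have "m j" using Suc by simp
      then have "x (Suc j) = True" using tr Suc(4) by simp
      then show ?thesis using tr Suc(4) by fastforce
    qed
  qed
  define i where "i = (LEAST k. m k)"
  have mi: "m i" unfolding i_def by (rule LeastI[of m n]) (rule r(2))
  have "C = {i..n}"
  proof (intro set_eqI iffI)
    fix k assume "k \<in> C" then show "k \<in> {i..n}" using r(3) Least_le[of m k] unfolding i_def by auto
  next
    fix k assume "k \<in> {i..n}" then show "k \<in> C" using r(3) cont[OF mi] by auto
  qed
  moreover have "C \<in> sem_at A S n" using runA r(2,3) unfolding sem_at_def by blast
  ultimately show "C \<in> {C \<in> sem_at A S n. \<exists>i j. C = {i..j}}" by blast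
next
  fix C assume "C \<in> {C \<in> sem_at A S n. \<exists>i j. C = {i..j}}"
  then obtain qs P m i j where r: "accepting_run A S n qs P m" "m n" "C = {k. k\<le>n \<and> m k}" and ij: "C = {i..j}"
    unfolding sem_at_def by blast
  have nC: "n \<in> C" using r by simp
  have key: "k \<le> n \<Longrightarrow> k \<noteq> 0 \<Longrightarrow> m (k - 1) \<Longrightarrow> m k" for k
  proof -
    assume k: "k \<le> n" "k \<noteq> 0" "m (k - 1)"
    have "k - 1 \<in> C" using k r(3) by simp
    then have "i \<le> k - 1" using ij by simp
    moreover have "n \<le> j" using nC ij by simp
    ultimately have "k \<in> C" using k ij by simp
    then show "m k" using r(3) by simp
  qed
  have "accepting_run (strictA A) S n (\<lambda>k. (qs k, k \<noteq> 0 \<and> m (k - 1))) P m"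
    unfolding accepting_run_def strictA_trans_iff
    using r(1,2) key unfolding accepting_run_def by (auto simp: strictA_def)
  then show "C \<in> sem_at (strictA A) S n" using r(2,3) unfolding sem_at_def by blast
qed

lemma sem_strictA: "sem (strictA A) S = sel_sem Strict A S"
  unfolding sem_def sel_sem.simps sem_at_strictA by auto

lemma strictA_cea: assumes "is_cea U A" shows "is_cea U (strictA A)"
proof -
  have fQ: "finite (states A)" and fD: "finite (trans A)" and iQ: "init A \<subseteq> states A"
    and fQ2: "final A \<subseteq> states A" and DQ: "trans A \<subseteq> states A \<times> (U \<times> UNIV) \<times> states A"
    using assms unfolding is_cea_def by auto
  have "trans (strictA A) \<subseteq> states (strictA A) \<times> (U \<times> UNIV) \<times> states (strictA A)"
  proof
    fix t assume t: "t \<in> trans (strictA A)"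
    obtain p x P b q y where tt: "t = ((p,x),(P,b),(q,y))" by (cases t) auto
    from t have "(p,(P,b),q) \<in> trans A" unfolding tt strictA_trans_iff by blast
    then show "t \<in> states (strictA A) \<times> (U \<times> UNIV) \<times> states (strictA A)" using DQ unfolding tt strictA_def by auto
  qed
  then show ?thesis using fQ fD iQ fQ2 unfolding is_cea_def by (auto simp: strictA_def)
qed

lemma strictA_card: assumes "is_cea U A"
  shows "card (states (strictA A)) \<le> 2 * card (states A)" "card (trans (strictA A)) \<le> 2 * card (trans A)"
proof -
  have fQ: "finite (states A)" and fD: "finite (trans A)" using assms unfolding is_cea_def by auto
  show "card (states (strictA A)) \<le> 2 * card (states A)"
    unfolding strictA_def using fQ by (simp add: card_cartesian_product card_UNIV_bool)
  have "card (trans (strictA A)) \<le> card (trans A \<times> (UNIV::bool set))"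
    unfolding strictA_def cea.sel by (rule card_image_le) (use fD in simp)
  then show "card (trans (strictA A)) \<le> 2 * card (trans A)" by (simp add: card_cartesian_product card_UNIV_bool)
qed



definition ren :: "('a \<Rightarrow> 'b) \<Rightarrow> ('a,'t) cea \<Rightarrow> ('b,'t) cea" where
  "ren f A = CEA (f ` states A) ((\<lambda>(p,l,q). (f p, l, f q)) ` trans A) (f ` init A) (f ` final A)"

lemma ren_trans_iff: "(x, l, y) \<in> trans (ren f A) \<longleftrightarrow> (\<exists>p q. (p, l, q) \<in> trans A \<and> x = f p \<and> y = f q)"
  unfolding ren_def by force

lemma ren_sem_at: assumes cea: "is_cea U A" and inj: "inj_on f (states A)"
  shows "sem_at (ren f A) S n = sem_at A S n"
proof (intro set_eqI iffI)
  fix C assume "C \<in> sem_at (ren f A) S n"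
  then obtain qs' P m where r: "accepting_run (ren f A) S n qs' P m" "m n" "C = {i. i\<le>n \<and> m i}"
    unfolding sem_at_def by blast
  have DQ: "trans A \<subseteq> states A \<times> (U \<times> UNIV) \<times> states A" and iQ: "init A \<subseteq> states A" and fQ: "final A \<subseteq> states A"
    using cea unfolding is_cea_def by auto
  define g where "g = inv_into (states A) f"
  have gf: "p \<in> states A \<Longrightarrow> g (f p) = p" for p unfolding g_def using inj by (simp add: inv_into_f_f)
  have "accepting_run A S n (\<lambda>k. g (qs' k)) P m"
    unfolding accepting_run_def
  proof (intro conjI allI impI)
    from r(1) have "qs' 0 \<in> f ` init A" unfolding accepting_run_def ren_def by simp
    then obtain q where "q \<in> init A" "qs' 0 = f q" by blast
    then show "g (qs' 0) \<in> init A" using gf iQ by auto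
  next
    from r(1) have "qs' (Suc n) \<in> f ` final A" unfolding accepting_run_def ren_def by simp
    then obtain q where "q \<in> final A" "qs' (Suc n) = f q" by blast
    then show "g (qs' (Suc n)) \<in> final A" using gf fQ by auto
  next
    fix i assume i: "i \<le> n"
    then have "(qs' i, (P i, m i), qs' (Suc i)) \<in> trans (ren f A)" "S i \<in> P i" using r(1) unfolding accepting_run_def by auto
    then obtain p q where "(p, (P i, m i), q) \<in> trans A" "qs' i = f p" "qs' (Suc i) = f q" unfolding ren_trans_iff by blast
    moreover then have "p \<in> states A" "q \<in> states A" using DQ by auto
    ultimately show "(g (qs' i), (P i, m i), g (qs' (Suc i))) \<in> trans A" using gf by simp
    show "S i \<in> P i" by fact
  qed
  then show "C \<in> sem_at A S n" using r(2,3) unfolding sem_at_def by blast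
next
  fix C assume "C \<in> sem_at A S n"
  then obtain qs P m where r: "accepting_run A S n qs P m" "m n" "C = {i. i\<le>n \<and> m i}"
    unfolding sem_at_def by blast
  have "accepting_run (ren f A) S n (\<lambda>k. f (qs k)) P m"
    using r(1) unfolding accepting_run_def ren_trans_iff by (auto simp: ren_def)
  then show "C \<in> sem_at (ren f A) S n" using r(2,3) unfolding sem_at_def by blast
qed

lemma ren_props: assumes cea: "is_cea U A" and inj: "inj_on f (states A)"
  shows "is_cea U (ren f A)" "card (states (ren f A)) = card (states A)" "card (trans (ren f A)) = card (trans A)"
proof -
  have fQ: "finite (states A)" and fD: "finite (trans A)" and iQ: "init A \<subseteq> states A"
    and fQ2: "final A \<subseteq> states A" and DQ: "trans A \<subseteq> states A \<times> (U \<times> UNIV) \<times> states A"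
    using cea unfolding is_cea_def by auto
  have "trans (ren f A) \<subseteq> states (ren f A) \<times> (U \<times> UNIV) \<times> states (ren f A)"
    using DQ unfolding ren_def by auto
  then show "is_cea U (ren f A)" using fQ fD iQ fQ2 unfolding is_cea_def ren_def by auto
  show "card (states (ren f A)) = card (states A)" unfolding ren_def using inj by (simp add: card_image)
  have "inj_on (\<lambda>(p,l,q). (f p, l, f q)) (trans A)"
  proof (rule inj_onI)
    fix x y assume xy: "x \<in> trans A" "y \<in> trans A" "(\<lambda>(p,l,q). (f p, l, f q)) x = (\<lambda>(p,l,q). (f p, l, f q)) y"
    obtain p1 l1 q1 where x: "x = (p1,l1,q1)" by (cases x) auto
    obtain p2 l2 q2 where y: "y = (p2,l2,q2)" by (cases y) auto
    have "p1 \<in> states A" "q1 \<in> states A" "p2 \<in> states A" "q2 \<in> states A" using xy(1,2) DQ x y by auto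
    moreover have "f p1 = f p2" "l1 = l2" "f q1 = f q2" using xy(3) x y by auto
    ultimately show "x = y" using inj x y by (auto dest: inj_onD)
  qed
  then show "card (trans (ren f A)) = card (trans A)" unfolding ren_def by (simp add: card_image)
qed

lemma to_nat:
  assumes cea: "is_cea U B"
  shows "\<exists>A'::(nat,'t) cea. is_cea U A' \<and> (\<forall>S. sem A' S = sem B S)
     \<and> card (states A') = card (states B) \<and> card (trans A') = card (trans B)"
proof -
  have "finite (states B)" using cea unfolding is_cea_def by auto
  then obtain f :: "_ \<Rightarrow> nat" and k where "f ` states B = {i. i < k}" "inj_on f (states B)"
    using finite_imp_inj_to_nat_seg by blast
  then have inj: "inj_on f (states B)" by simp
  have "\<forall>S. sem (ren f B) S = sem B S" unfolding sem_def using ren_sem_at[OF cea inj] by simp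
  then show ?thesis using ren_props[OF cea inj] by blast
qed

theorem theorem4:
  fixes U :: "'t set set"
  assumes "UNIV \<in> U"
    and "\<forall>P\<in>U. - P \<in> U"
    and "\<forall>P\<in>U. \<forall>Q\<in>U. P \<union> Q \<in> U \<and> P \<inter> Q \<in> U"
  shows "\<exists>c::nat. \<forall>(A::('q, 't) cea) sel. is_cea U A \<longrightarrow>
           (\<exists>A'::(nat, 't) cea. is_cea U A'
              \<and> (\<forall>S. sem A' S = sel_sem sel A S)
              \<and> (sel = Strict \<longrightarrow> card (states A') \<le> 2 * card (states A)
                                  \<and> card (trans A') \<le> 2 * card (trans A))
              \<and> (sel \<noteq> Strict \<longrightarrow> cea_size A' \<le> 2 ^ (c * cea_size A)))"
proof (intro exI[of _ 10] allI impI)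
  fix A :: "('q, 't) cea" and sel
  assume cea: "is_cea U A"
  show "\<exists>A'::(nat, 't) cea. is_cea U A'
              \<and> (\<forall>S. sem A' S = sel_sem sel A S)
              \<and> (sel = Strict \<longrightarrow> card (states A') \<le> 2 * card (states A)
                                  \<and> card (trans A') \<le> 2 * card (trans A))
              \<and> (sel \<noteq> Strict \<longrightarrow> cea_size A' \<le> 2 ^ (10 * cea_size A))"
  proof (cases "sel = Strict")
    case True
    obtain A' :: "(nat,'t) cea" where A': "is_cea U A'" "\<forall>S. sem A' S = sem (strictA A) S"
      "card (states A') = card (states (strictA A))" "card (trans A') = card (trans (strictA A))"
      using to_nat[OF strictA_cea[OF cea]] by blast
    show ?thesis
      using A' strictA_card[OF cea] True by (intro exI[of _ A']) (simp add: sem_strictA)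
  next
    case False
    obtain A' :: "(nat,'t) cea" where A': "is_cea U A'" "\<forall>S. sem A' S = sem (selA sel A) S"
      "card (states A') = card (states (selA sel A))" "card (trans A') = card (trans (selA sel A))"
      using to_nat[OF selA_cea[OF assms cea]] by blast
    have "cea_size A' = cea_size (selA sel A)" unfolding cea_size_def using A' by simp
    then show ?thesis
      using A' selA_size[OF cea, of sel] sem_selA[OF cea False] False by (intro exI[of _ A']) simp
  qed
qed

end
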